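(* For $n\ge2$ and $i\ge1$ there are isomorphisms of $S_{n-1}$-representations $$\widehat{\mathrm{Lie}}^i_n\big\downarrow\ \cong\ \Big(\widehat{\mathrm{Lie}}^{i-1}_{n-1}\big\downarrow\ \oplus\ \widehat{\mathrm{Lie}}^{i-1}_{n-2}\Big)\big\uparrow,\qquad \widehat W^i_n\big\downarrow\ \cong\ \Big(\widehat W^{i-1}_{n-1}\big\downarrow\ \oplus\ \widehat W^{i-1}_{n-2}\Big)\big\uparrow,$$ where for an $S_m$-representation, $\downarrow$ denotes restriction to $S_{m-1}$ and $\uparrow$ denotes induction to $S_{m+1}$.
   Context: Let $C_n\subset S_n$ be generated by an $n$-cycle $c$, $\chi_\zeta$ a linear character of $C_n$ sending $c$ to a primitive $n$-th root of unity, $\mathrm{Lie}_{(n)}=\chi_\zeta\uparrow_{C_n}^{S_n}$, $\ell_n=\mathrm{ch}(\mathrm{Lie}_{(n)})$ (Frobenius characteristic), $\pi_n=\omega(\ell_n)$. For $\lambda=1^{m_1}2^{m_2}\cdots$ define $S_{|\lambda|}$-characters by $\mathrm{ch}(\mathrm{Lie}_\lambda)=\prod_j h_{m_j}[\ell_j]$ and $\mathrm{ch}(W_\lambda)=\prod_{j\text{ odd}}h_{m_j}[\pi_j]\prod_{j\text{ even}}e_{m_j}[\pi_j]$ (plethysm); $\mathrm{rank}(\lambda)=|\lambda|-\ell(\lambda)$. For $m,i\ge0$, $\widehat{\mathrm{Lie}}^i_m=\bigoplus_\lambda\mathrm{Lie}_\lambda$ and $\widehat W^i_m=\bigoplus_\lambda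 W_\lambda$, sums over partitions $\lambda$ of $m$ having no part equal to $1$ and rank $i$ (so $\widehat{\mathrm{Lie}}^0_0=\widehat W^0_0=\mathbf 1_{S_0}$, and $\widehat{\mathrm{Lie}}^i_1=\widehat W^i_1=0$). *)

theory Defs
  imports Complex_Main "HOL-Library.Poly_Mapping" "HOL-Library.Multiset"
    "HOL-Combinatorics.Permutations"
begin

text \<open>A (complex) representation is identified
with its character: a function on permutations, zero off the group.\<close>

definition perms :: "nat \<Rightarrow> (nat \<Rightarrow> nat) set" where
  "perms m = {\<sigma>. \<sigma> permutes {..<m}}"

definition induce_char ::
  "(nat \<Rightarrow> nat) set \<Rightarrow> (nat \<Rightarrow> nat) set \<Rightarrow> ((nat \<Rightarrow> nat) \<Rightarrow> complex) \<Rightarrow> (nat \<Rightarrow> nat) \<Rightarrow> complex" where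
  "induce_char G H \<psi> \<sigma> =
     (if \<sigma> \<in> G then
        (\<Sum>g\<in>G. if inv g \<circ> \<sigma> \<circ> g \<in> H then \<psi> (inv g \<circ> \<sigma> \<circ> g) else 0) / of_nat (card H)
      else 0)"

definition res :: "nat \<Rightarrow> ((nat \<Rightarrow> nat) \<Rightarrow> complex) \<Rightarrow> (nat \<Rightarrow> nat) \<Rightarrow> complex" where
  "res m \<chi> \<sigma> = (if \<sigma> \<in> perms (m - 1) then \<chi> \<sigma> else 0)"

definition ind :: "nat \<Rightarrow> ((nat \<Rightarrow> nat) \<Rightarrow> complex) \<Rightarrow> (nat \<Rightarrow> nat) \<Rightarrow> complex" where
  "ind m \<chi> = induce_char (perms (Suc m)) (perms m) \<chi>"

definition cyc_orbit :: "(nat \<Rightarrow> nat) \<Rightarrow> nat \<Rightarrow> nat set" where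
  "cyc_orbit \<sigma> x = {(\<sigma> ^^ k) x | k. True}"

definition cycle_type :: "nat \<Rightarrow> (nat \<Rightarrow> nat) \<Rightarrow> nat multiset" where
  "cycle_type m \<sigma> = image_mset card (mset_set {cyc_orbit \<sigma> x | x. x < m})"

text \<open>The ring of symmetric functions over C is the polynomial ring
C[p_1,p_2,...]; an element is a finitely supported map from partitions
(multisets of positive parts) lambda to the coefficient of p_lambda.\<close>

type_synonym symf = "nat multiset \<Rightarrow>\<^sub>0 complex"

definition pw :: "nat multiset \<Rightarrow> symf" where
  "pw la = Poly_Mapping.single la 1"

definition sconst :: "complex \<Rightarrow> symf" where
  "sconst c = Poly_Mapping.single {#} c"

definition partitions :: "nat \<Rightarrow> nat multiset set" where
  "partitions m = {la. sum_mset la = m \<and> 0 \<notin># la}"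

definition zee :: "nat multiset \<Rightarrow> nat" where
  "zee la = (\<Prod>j\<in>set_mset la. j ^ count la j * fact (count la j))"

definition frob :: "nat \<Rightarrow> ((nat \<Rightarrow> nat) \<Rightarrow> complex) \<Rightarrow> symf" where
  "frob m \<chi> = (\<Sum>\<sigma>\<in>perms m. sconst (\<chi> \<sigma> / of_nat (fact m)) * pw (cycle_type m \<sigma>))"

text \<open>The S_m-character whose Frobenius characteristic is F:
chi_F(sigma) = z_mu * [p_mu]F with mu the cycle type of sigma.\<close>
definition char_of :: "nat \<Rightarrow> symf \<Rightarrow> (nat \<Rightarrow> nat) \<Rightarrow> complex" where
  "char_of m F \<sigma> = (if \<sigma> \<in> perms m
      then of_nat (zee (cycle_type m \<sigma>)) * Poly_Mapping.lookup F (cycle_type m \<sigma>) else 0)"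

definition hsym :: "nat \<Rightarrow> symf" where
  "hsym m = frob m (\<lambda>\<sigma>. 1)"

definition esym :: "nat \<Rightarrow> symf" where
  "esym m = frob m (\<lambda>\<sigma>. of_int (sign \<sigma>))"

definition omega :: "symf \<Rightarrow> symf" where
  "omega F = (\<Sum>\<mu>\<in>Poly_Mapping.keys F. Poly_Mapping.single \<mu>
      ((-1) ^ (sum_mset \<mu> - size \<mu>) * Poly_Mapping.lookup F \<mu>))"

definition adams :: "nat \<Rightarrow> symf \<Rightarrow> symf" where
  "adams k g = (\<Sum>\<mu>\<in>Poly_Mapping.keys g. Poly_Mapping.single (image_mset ((*) k) \<mu>) (Poly_Mapping.lookup g \<mu>))"

definition pleth :: "symf \<Rightarrow> symf \<Rightarrow> symf" where
  "pleth f g = (\<Sum>la\<in>Poly_Mapping.keys f. sconst (Poly_Mapping.lookup f la) * prod_mset (image_mset (\<lambda>i. adams i g) la))"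

definition ncycle :: "nat \<Rightarrow> nat \<Rightarrow> nat" where
  "ncycle n x = (if x < n then Suc x mod n else x)"

definition Cn :: "nat \<Rightarrow> (nat \<Rightarrow> nat) set" where
  "Cn n = {ncycle n ^^ k | k. k < n}"

definition chi_zeta :: "nat \<Rightarrow> (nat \<Rightarrow> nat) \<Rightarrow> complex" where
  "chi_zeta n \<tau> = cis (2 * pi / real n) ^ (THE k. k < n \<and> \<tau> = ncycle n ^^ k)"

definition Lie_char :: "nat \<Rightarrow> (nat \<Rightarrow> nat) \<Rightarrow> complex" where
  "Lie_char n = induce_char (perms n) (Cn n) (chi_zeta n)"

definition ell :: "nat \<Rightarrow> symf" where
  "ell n = frob n (Lie_char n)"

definition piL :: "nat \<Rightarrow> symf" where
  "piL n = omega (ell n)"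

definition ch_Lie :: "nat multiset \<Rightarrow> symf" where
  "ch_Lie la = (\<Prod>j\<in>set_mset la. pleth (hsym (count la j)) (ell j))"

definition ch_W :: "nat multiset \<Rightarrow> symf" where
  "ch_W la = (\<Prod>j\<in>set_mset la.
      if odd j then pleth (hsym (count la j)) (piL j)
      else pleth (esym (count la j)) (piL j))"

definition rank :: "nat multiset \<Rightarrow> nat" where
  "rank la = sum_mset la - size la"

definition hat_parts :: "nat \<Rightarrow> nat \<Rightarrow> nat multiset set" where
  "hat_parts i m = {la\<in>partitions m. 1 \<notin># la \<and> rank la = i}"

definition LieHat :: "nat \<Rightarrow> nat \<Rightarrow> (nat \<Rightarrow> nat) \<Rightarrow> complex" where
  "LieHat i m = char_of m (\<Sum>la\<in>hat_parts i m. ch_Lie la)"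

definition WHat :: "nat \<Rightarrow> nat \<Rightarrow> (nat \<Rightarrow> nat) \<Rightarrow> complex" where
  "WHat i m = char_of m (\<Sum>la\<in>hat_parts i m. ch_W la)"

end

theory Submission
  imports Defs
begin

lemma sconst_0[simp]: "sconst 0 = 0" by (simp add: sconst_def)
lemma sconst_1[simp]: "sconst 1 = 1" by (simp add: sconst_def)
lemma sconst_mult: "sconst a * sconst b = sconst (a*b)" by (simp add: sconst_def mult_single)
lemma sconst_add: "sconst (a+b) = sconst a + sconst b" by (simp add: sconst_def single_add)
lemma sconst_single: "sconst a * Poly_Mapping.single k b = Poly_Mapping.single k (a*b)"
  by (simp add: sconst_def mult_single)
lemma sconst_pw: "sconst a * pw k = Poly_Mapping.single k a"
  by (simp add: pw_def sconst_single)
lemma pw_mult: "pw a * pw b = pw (a+b)" by (simp add: pw_def mult_single)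
lemma pw_empty[simp]: "pw {#} = 1" by (simp add: pw_def)

definition lext :: "(nat multiset \<Rightarrow> symf) \<Rightarrow> symf \<Rightarrow> symf" where
  "lext Q F = (\<Sum>\<mu>\<in>Poly_Mapping.keys F. sconst (Poly_Mapping.lookup F \<mu>) * Q \<mu>)"

lemma lext_superset:
  assumes "finite A" "Poly_Mapping.keys F \<subseteq> A"
  shows "lext Q F = (\<Sum>\<mu>\<in>A. sconst (Poly_Mapping.lookup F \<mu>) * Q \<mu>)"
  unfolding lext_def by (rule sum.mono_neutral_left) (use assms in \<open>auto simp: in_keys_iff\<close>)

lemma lext_add: "lext Q (F+G) = lext Q F + lext Q G"
proof -
  let ?A = "Poly_Mapping.keys F \<union> Poly_Mapping.keys G"
  have "lext Q (F+G) = (\<Sum>\<mu>\<in>?A. sconst (Poly_Mapping.lookup (F+G) \<mu>) * Q \<mu>)"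
    by (rule lext_superset) (use keys_add[of F G] in auto)
  also have "\<dots> = (\<Sum>\<mu>\<in>?A. sconst (Poly_Mapping.lookup F \<mu>) * Q \<mu>) + (\<Sum>\<mu>\<in>?A. sconst (Poly_Mapping.lookup G \<mu>) * Q \<mu>)"
    by (simp add: lookup_add sconst_add distrib_right sum.distrib)
  also have "\<dots> = lext Q F + lext Q G"
    by (subst (1 2) lext_superset[of ?A]) auto
  finally show ?thesis .
qed

lemma lext_zero[simp]: "lext Q 0 = 0" by (simp add: lext_def)

lemma lext_sum: "lext Q (sum F I) = (\<Sum>i\<in>I. lext Q (F i))"
  by (induction I rule: infinite_finite_induct) (auto simp: lext_add)

lemma lext_single: "lext Q (Poly_Mapping.single k v) = sconst v * Q k"
  by (cases "v = 0") (auto simp: lext_def)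

lemma lext_sconst_pw: "lext Q (sconst v * pw k) = sconst v * Q k"
  by (simp add: sconst_pw lext_single)

lemma repr: "lext pw F = F"
proof (rule poly_mapping_eqI)
  fix k
  have "Poly_Mapping.lookup (lext pw F) k = (\<Sum>\<mu>\<in>Poly_Mapping.keys F. if \<mu> = k then Poly_Mapping.lookup F \<mu> else 0)"
    by (simp add: lext_def lookup_sum sconst_pw lookup_single when_def)
  also have "\<dots> = Poly_Mapping.lookup F k"
    by (simp add: in_keys_iff)
  finally show "Poly_Mapping.lookup (lext pw F) k = Poly_Mapping.lookup F k" .
qed

lemma repr': "F = (\<Sum>\<mu>\<in>Poly_Mapping.keys F. sconst (Poly_Mapping.lookup F \<mu>) * pw \<mu>)"
  using repr[of F] by (simp add: lext_def)

lemma lext_sconst_mult: "lext Q (sconst a * F) = sconst a * lext Q F"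
proof -
  have "lext Q (sconst a * F) = lext Q (\<Sum>\<mu>\<in>Poly_Mapping.keys F. sconst (a * Poly_Mapping.lookup F \<mu>) * pw \<mu>)"
    by (subst repr'[of F]) (simp add: sum_distrib_left mult.assoc[symmetric] sconst_mult)
  also have "\<dots> = sconst a * lext Q F"
    by (simp only: lext_sum lext_sconst_pw) (simp add: lext_def sum_distrib_left sconst_mult[symmetric] mult.assoc)
  finally show ?thesis .
qed

definition Dq :: "nat multiset \<Rightarrow> symf" where
  "Dq \<mu> = sconst (of_nat (count \<mu> 1)) * pw (\<mu> - {#1#})"
definition Dp :: "symf \<Rightarrow> symf" where "Dp = lext Dq"

lemma Dp_add: "Dp (F + G) = Dp F + Dp G" by (simp add: Dp_def lext_add)
lemma Dp_sum: "Dp (sum F I) = (\<Sum>i\<in>I. Dp (F i))" by (simp add: Dp_def lext_sum)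
lemma Dp_sconst_mult: "Dp (sconst a * F) = sconst a * Dp F" by (simp add: Dp_def lext_sconst_mult)
lemma Dp_sconst_pw: "Dp (sconst v * pw k) = sconst v * Dq k" by (simp add: Dp_def lext_sconst_pw)
lemma Dp_pw: "Dp (pw k) = Dq k" using Dp_sconst_pw[of 1 k] by simp
lemma Dp_repr: "Dp F = (\<Sum>\<mu>\<in>Poly_Mapping.keys F. sconst (Poly_Mapping.lookup F \<mu>) * Dq \<mu>)"
  by (simp add: Dp_def lext_def)

lemma sconst_count_shift:
  "sconst (of_nat (count a 1)) * pw (a - {#1#} + b) = sconst (of_nat (count a 1)) * pw (a + b - {#1#})"
proof (cases "1 \<in># a")
  case True
  then have "a - {#1#} + b = a + b - {#1#}" by (simp add: diff_union_single_conv)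
  then show ?thesis by (simp only:)
next
  case False
  then have "count a 1 = 0" by (simp add: count_eq_zero_iff)
  then show ?thesis by simp
qed

lemma Dq_add: "Dq (a + b) = Dq a * pw b + pw a * Dq b"
proof -
  have "Dq a * pw b = sconst (of_nat (count a 1)) * pw (a + b - {#1#})"
    using sconst_count_shift[of a b] by (simp add: Dq_def mult.assoc pw_mult)
  moreover have "pw a * Dq b = sconst (of_nat (count b 1)) * pw (a + b - {#1#})"
    using sconst_count_shift[of b a]
    by (simp add: Dq_def mult.left_commute[of "pw a"] pw_mult add.commute)
  ultimately show ?thesis
    by (simp add: Dq_def sconst_add distrib_right)
qed

lemma Dp_pw_mult: "Dp (pw a * X) = Dq a * X + pw a * Dp X"
proof -
  have "pw a * X = (\<Sum>b\<in>Poly_Mapping.keys X. sconst (Poly_Mapping.lookup X b) * pw (a + b))"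
    by (subst repr'[of X]) (simp add: sum_distrib_left mult.left_commute[of "pw a"] pw_mult)
  hence "Dp (pw a * X) = (\<Sum>b\<in>Poly_Mapping.keys X. sconst (Poly_Mapping.lookup X b) * Dq (a + b))"
    by (simp add: Dp_sum Dp_sconst_pw)
  also have "\<dots> = Dq a * (\<Sum>b\<in>Poly_Mapping.keys X. sconst (Poly_Mapping.lookup X b) * pw b)
      + pw a * (\<Sum>b\<in>Poly_Mapping.keys X. sconst (Poly_Mapping.lookup X b) * Dq b)"
    by (simp add: Dq_add sum_distrib_left distrib_left sum.distrib mult.left_commute)
  also have "\<dots> = Dq a * X + pw a * Dp X"
    by (simp add: Dp_repr repr'[symmetric])
  finally show ?thesis .
qed

lemma Dp_mult: "Dp (F * G) = Dp F * G + F * Dp G"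
proof -
  have "F * G = (\<Sum>a\<in>Poly_Mapping.keys F. sconst (Poly_Mapping.lookup F a) * (pw a * G))"
    by (subst repr'[of F]) (simp add: sum_distrib_right mult.assoc)
  hence "Dp (F * G) = (\<Sum>a\<in>Poly_Mapping.keys F. sconst (Poly_Mapping.lookup F a) * (Dq a * G + pw a * Dp G))"
    by (simp add: Dp_sum Dp_sconst_mult Dp_pw_mult)
  also have "\<dots> = (\<Sum>a\<in>Poly_Mapping.keys F. sconst (Poly_Mapping.lookup F a) * Dq a) * G
     + (\<Sum>a\<in>Poly_Mapping.keys F. sconst (Poly_Mapping.lookup F a) * pw a) * Dp G"
    by (simp add: sum_distrib_right distrib_left sum.distrib mult.assoc)
  also have "\<dots> = Dp F * G + F * Dp G"
    by (simp add: Dp_repr repr'[symmetric])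
  finally show ?thesis .
qed

lemma Dp_sconst[simp]: "Dp (sconst a) = 0"
  using Dp_sconst_pw[of a "{#}"] by (simp add: Dq_def)
lemma Dp_one[simp]: "Dp 1 = 0" using Dp_sconst[of 1] by simp
lemma Dp_zero[simp]: "Dp 0 = 0" by (simp add: Dp_def)


lemma pw_single: "pw a * Poly_Mapping.single b v = Poly_Mapping.single (a + b) v"
  by (simp add: pw_def mult_single)

lemma lookup_sconst_mult: "Poly_Mapping.lookup (sconst a * F) \<mu> = a * Poly_Mapping.lookup F \<mu>"
proof -
  have "sconst a * F = (\<Sum>\<nu>\<in>Poly_Mapping.keys F. Poly_Mapping.single \<nu> (a * Poly_Mapping.lookup F \<nu>))"
    by (subst repr'[of F]) (simp add: sum_distrib_left sconst_pw sconst_single)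
  also have "Poly_Mapping.lookup \<dots> \<mu> = (\<Sum>\<nu>\<in>Poly_Mapping.keys F. if \<nu> = \<mu> then a * Poly_Mapping.lookup F \<nu> else 0)"
    by (simp add: lookup_sum lookup_single when_def)
  also have "\<dots> = a * Poly_Mapping.lookup F \<mu>" by (simp add: in_keys_iff)
  finally show ?thesis .
qed

lemma sconst_of_nat: "sconst (of_nat n) = of_nat n"
  by (simp add: sconst_def)

lemma lookup_Dp: "Poly_Mapping.lookup (Dp F) \<mu> = of_nat (count \<mu> 1 + 1) * Poly_Mapping.lookup F (\<mu> + {#1#})"
proof -
  have "Poly_Mapping.lookup (Dp F) \<mu> = (\<Sum>a\<in>Poly_Mapping.keys F.
      if a - {#1#} = \<mu> then Poly_Mapping.lookup F a * of_nat (count a 1) else 0)"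
    unfolding Dp_repr Dq_def lookup_sum
    by (rule sum.cong[OF refl]) (simp add: sconst_pw sconst_single lookup_single when_def)
  also have "\<dots> = (\<Sum>a\<in>Poly_Mapping.keys F.
      if a = \<mu> + {#1#} then of_nat (count \<mu> 1 + 1) * Poly_Mapping.lookup F a else 0)"
  proof (rule sum.cong[OF refl])
    fix a
    show "(if a - {#1#} = \<mu> then Poly_Mapping.lookup F a * of_nat (count a 1) else 0) =
      (if a = \<mu> + {#1#} then of_nat (count \<mu> 1 + 1) * Poly_Mapping.lookup F a else 0)"
    proof (cases "1 \<in># a")
      case True
      then have "a - {#1#} = \<mu> \<longleftrightarrow> a = \<mu> + {#1#}" by (auto simp: insert_DiffM2)
      then show ?thesis by auto
    next
      case False
      then have "count a 1 = 0" by (simp add: count_eq_zero_iff)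
      moreover have "a \<noteq> \<mu> + {#1#}" using False by auto
      ultimately show ?thesis by simp
    qed
  qed
  also have "\<dots> = of_nat (count \<mu> 1 + 1) * Poly_Mapping.lookup F (\<mu> + {#1#})"
    by (simp add: in_keys_iff)
  finally show ?thesis .
qed


lemma lookup_p1_mult:
  "Poly_Mapping.lookup (pw {#1#} * G) \<mu> = (if 1 \<in># \<mu> then Poly_Mapping.lookup G (\<mu> - {#1#}) else 0)"
proof -
  have "pw {#1#} * G = (\<Sum>b\<in>Poly_Mapping.keys G. Poly_Mapping.single (add_mset 1 b) (Poly_Mapping.lookup G b))"
    by (subst repr'[of G]) (simp add: sum_distrib_left sconst_pw pw_single)
  hence "Poly_Mapping.lookup (pw {#1#} * G) \<mu> = (\<Sum>b\<in>Poly_Mapping.keys G. if add_mset 1 b = \<mu> then Poly_Mapping.lookup G b else 0)"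
    by (simp add: lookup_sum lookup_single when_def)
  also have "\<dots> = (\<Sum>b\<in>Poly_Mapping.keys G. if b = \<mu> - {#1#} \<and> 1 \<in># \<mu> then Poly_Mapping.lookup G b else 0)"
    by (rule sum.cong[OF refl]) (metis add_mset_remove_trivial insert_DiffM union_single_eq_member)
  also have "\<dots> = (if 1 \<in># \<mu> then Poly_Mapping.lookup G (\<mu> - {#1#}) else 0)"
    by (auto simp: in_keys_iff)
  finally show ?thesis .
qed

lemma Dp_lext: "Dp (lext Q F) = lext (\<lambda>\<mu>. Dp (Q \<mu>)) F"
  unfolding lext_def Dp_sum by (simp only: Dp_sconst_mult)

lemma lext_Dq: "lext Q (Dq \<mu>) = sconst (of_nat (count \<mu> 1)) * Q (\<mu> - {#1#})"
  unfolding Dq_def by (rule lext_sconst_pw)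

lemma lext_Dp: "lext Q (Dp F) = (\<Sum>\<mu>\<in>Poly_Mapping.keys F. sconst (Poly_Mapping.lookup F \<mu>) * (sconst (of_nat (count \<mu> 1)) * Q (\<mu> - {#1#})))"
  unfolding Dp_repr lext_sum lext_sconst_mult lext_Dq ..

lemma count_image_times: "k \<noteq> 1 \<Longrightarrow> count (image_mset ((*) k) \<mu>) (1::nat) = 0"
proof -
  assume k: "k \<noteq> 1"
  have "1 \<notin># image_mset ((*) k) \<mu>"
  proof
    assume "1 \<in># image_mset ((*) k) \<mu>"
    then obtain x where "1 = k*x" unfolding in_image_mset image_iff by blast
    then show False using k by simp
  qed
  then show ?thesis by (simp only: not_in_iff)
qed

lemma adams_lext: "adams k g = lext (\<lambda>\<mu>. pw (image_mset ((*) k) \<mu>)) g"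
  by (simp add: adams_def lext_def sconst_pw)

lemma image_mset_times1: "image_mset ((*) (1::nat)) \<mu> = \<mu>"
  by (induction \<mu>) auto

lemma adams_1: "adams 1 g = g"
  unfolding adams_lext image_mset_times1 by (rule repr)

lemma Dp_adams: "k \<noteq> 1 \<Longrightarrow> Dp (adams k g) = 0"
proof -
  assume k: "k \<noteq> 1"
  have "count (image_mset ((*) k) \<mu>) 1 = 0" for \<mu>
    using k by (rule count_image_times)
  then have "Dp (pw (image_mset ((*) k) \<mu>)) = 0" for \<mu>
    by (simp add: Dp_pw Dq_def)
  then show ?thesis
    unfolding adams_lext Dp_lext by (simp add: lext_def)
qed

definition Pl :: "symf \<Rightarrow> nat multiset \<Rightarrow> symf" where
  "Pl g la = prod_mset (image_mset (\<lambda>i. adams i g) la)"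

lemma pleth_lext: "pleth f g = lext (Pl g) f"
  unfolding pleth_def lext_def Pl_def ..

lemma Pl_add: "Pl g (add_mset i la) = adams i g * Pl g la"
  by (simp add: Pl_def)

lemma Dp_Pl: "Dp (Pl g la) = of_nat (count la 1) * Dp g * Pl g (la - {#1#})"
proof (induction la)
  case empty
  then show ?case by (simp add: Pl_def)
next
  case (add i la)
  show ?case
  proof (cases "i = 1")
    case True
    have "Dp (Pl g (add_mset i la)) = Dp g * Pl g la + g * Dp (Pl g la)"
      unfolding Pl_add Dp_mult True adams_1 ..
    also have "g * Dp (Pl g la) = of_nat (count la 1) * Dp g * Pl g la"
    proof (cases "1 \<in># la")
      case True
      then have "la = add_mset 1 (la - {#1#})" by simp
      then have "Pl g la = g * Pl g (la - {#1#})"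
        by (metis Pl_add adams_1)
      then show ?thesis unfolding add.IH by (simp add: mult.commute mult.left_commute mult.assoc)
    next
      case False
      then have "count la 1 = 0" by (simp add: count_eq_zero_iff)
      then show ?thesis unfolding add.IH by simp
    qed
    finally have "Dp (Pl g (add_mset i la)) = (1 + of_nat (count la 1)) * Dp g * Pl g la"
      by (simp add: distrib_right)
    then show ?thesis using True by simp
  next
    case False
    have "Dp (Pl g (add_mset i la)) = adams i g * Dp (Pl g la)"
      unfolding Pl_add Dp_mult using Dp_adams[OF False] by simp
    moreover have "Pl g (add_mset i la - {#1#}) = adams i g * Pl g (la - {#1#})"
      using False by (simp add: Pl_add)
    moreover have "count (add_mset i la) 1 = count la 1" using False by simp
    ultimately show ?thesis unfolding add.IH by (simp add: mult.commute mult.left_commute mult.assoc)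
  qed
qed


lemma Dp_pleth: "Dp (pleth f g) = pleth (Dp f) g * Dp g"
proof -
  have "Dp (pleth f g) = (\<Sum>la\<in>Poly_Mapping.keys f. sconst (Poly_Mapping.lookup f la) * (sconst (of_nat (count la 1)) * Pl g (la - {#1#}) * Dp g))"
    unfolding pleth_lext Dp_lext unfolding lext_def Dp_Pl sconst_of_nat
    by (rule sum.cong[OF refl]) (simp only: mult.commute mult.left_commute mult.assoc)
  also have "\<dots> = pleth (Dp f) g * Dp g"
    unfolding pleth_lext lext_Dp sum_distrib_right by (simp only: mult.assoc)
  finally show ?thesis .
qed

definition sgnr :: "nat multiset \<Rightarrow> complex" where
  "sgnr \<mu> = (-1) ^ (sum_mset \<mu> - size \<mu>)"

lemma single_aux: "Poly_Mapping.single x (s * a) = sconst a * (sconst s * pw x)"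
proof -
  have "sconst a * (sconst s * pw x) = Poly_Mapping.single x (a * s)"
    by (simp only: sconst_pw sconst_single)
  then show ?thesis by (simp only: mult.commute[of a s])
qed

lemma omega_lext: "omega F = lext (\<lambda>\<mu>. sconst (sgnr \<mu>) * pw \<mu>) F"
  unfolding omega_def lext_def sgnr_def
  by (rule sum.cong[OF refl]) (rule single_aux)

lemma sgnr_minus1: "1 \<in># \<mu> \<Longrightarrow> sgnr (\<mu> - {#1#}) = sgnr \<mu>"
proof -
  assume "1 \<in># \<mu>"
  then obtain \<nu> where "\<mu> = add_mset 1 \<nu>" by (metis multi_member_split)
  then show ?thesis by (simp add: sgnr_def)
qed

lemma Dp_omega: "Dp (omega F) = omega (Dp F)"
proof -
  have "Dp (omega F) = (\<Sum>\<mu>\<in>Poly_Mapping.keys F. sconst (Poly_Mapping.lookup F \<mu>) * (sconst (sgnr \<mu>) * Dq \<mu>))"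
    unfolding omega_lext Dp_lext unfolding Dp_sconst_mult Dp_pw lext_def ..
  also have "\<dots> = (\<Sum>\<mu>\<in>Poly_Mapping.keys F. sconst (Poly_Mapping.lookup F \<mu>) * (sconst (of_nat (count \<mu> 1)) * (sconst (sgnr (\<mu> - {#1#})) * pw (\<mu> - {#1#}))))"
  proof (rule sum.cong[OF refl])
    fix \<mu>
    show "sconst (Poly_Mapping.lookup F \<mu>) * (sconst (sgnr \<mu>) * Dq \<mu>) =
      sconst (Poly_Mapping.lookup F \<mu>) * (sconst (of_nat (count \<mu> 1)) * (sconst (sgnr (\<mu> - {#1#})) * pw (\<mu> - {#1#})))"
    proof (cases "1 \<in># \<mu>")
      case True
      then show ?thesis unfolding Dq_def sgnr_minus1[OF True] by (simp only: mult.commute mult.left_commute mult.assoc)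
    next
      case False
      then have "count \<mu> 1 = 0" by (simp add: count_eq_zero_iff)
      then show ?thesis unfolding Dq_def by simp
    qed
  qed
  also have "\<dots> = omega (Dp F)"
    unfolding omega_lext lext_Dp ..
  finally show ?thesis .
qed


lemma perms_iff: "\<sigma> \<in> perms m \<longleftrightarrow> \<sigma> permutes {..<m}"
  by (simp add: perms_def)

lemma finite_perms[simp]: "finite (perms m)"
  unfolding perms_def by (rule finite_permutations) simp

lemma card_perms: "card (perms m) = fact m"
  unfolding perms_def by (rule card_permutations) auto

lemma perms_Suc_fix: "\<sigma> \<in> perms (Suc m) \<Longrightarrow> \<sigma> m = m \<Longrightarrow> \<sigma> \<in> perms m"
  unfolding perms_def mem_Collect_eq by (erule permutes_superset) (auto simp: less_Suc_eq)

lemma perms_mono: "\<sigma> \<in> perms m \<Longrightarrow> \<sigma> \<in> perms (Suc m)"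
  unfolding perms_def by (auto intro: permutes_subset)

lemma perms_fix: "\<sigma> \<in> perms m \<Longrightarrow> \<sigma> m = m"
  unfolding perms_def by (auto intro: permutes_not_in)

lemma perms_Suc_iff: "\<sigma> \<in> perms m \<longleftrightarrow> \<sigma> \<in> perms (Suc m) \<and> \<sigma> m = m"
  using perms_Suc_fix perms_mono perms_fix by blast

lemma perms_conj: "g \<in> perms m \<Longrightarrow> \<sigma> \<in> perms m \<Longrightarrow> inv g \<circ> \<sigma> \<circ> g \<in> perms m"
  unfolding perms_def mem_Collect_eq by (auto intro!: permutes_compose permutes_inv)

lemma x_in_orbit: "x \<in> cyc_orbit \<sigma> x"
  unfolding cyc_orbit_def by (auto intro: exI[of _ 0])

lemma sx_in_orbit: "\<sigma> x \<in> cyc_orbit \<sigma> x"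
  unfolding cyc_orbit_def by (auto intro!: exI[of _ 1])

lemma funpow_fix: "\<sigma> x = x \<Longrightarrow> (\<sigma> ^^ k) x = x"
  by (induction k) auto

lemma orbit_fix: "\<sigma> x = x \<Longrightarrow> cyc_orbit \<sigma> x = {x}"
  unfolding cyc_orbit_def using funpow_fix[of \<sigma> x] by auto

lemma orbit_card1: "card (cyc_orbit \<sigma> x) = 1 \<Longrightarrow> \<sigma> x = x"
  using x_in_orbit[of x \<sigma>] sx_in_orbit[of \<sigma> x] by (metis card_1_singletonE singletonD)

lemma orbits_eq: "{cyc_orbit \<sigma> x | x. x < m} = cyc_orbit \<sigma> ` {..<m}"
  by auto

lemma cycle_type_Suc:
  assumes "\<sigma> \<in> perms m"
  shows "cycle_type (Suc m) \<sigma> = add_mset 1 (cycle_type m \<sigma>)"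
proof -
  have fm: "\<sigma> m = m" using perms_fix[OF assms] .
  have "cyc_orbit \<sigma> ` {..<Suc m} = insert {m} (cyc_orbit \<sigma> ` {..<m})"
    using orbit_fix[of \<sigma> m, OF fm] by (auto simp: lessThan_Suc)
  moreover have "{m} \<notin> cyc_orbit \<sigma> ` {..<m}"
  proof
    assume "{m} \<in> cyc_orbit \<sigma> ` {..<m}"
    then obtain x where "x < m" "{m} = cyc_orbit \<sigma> x" by auto
    then show False using x_in_orbit[of x \<sigma>] by auto
  qed
  ultimately show ?thesis
    unfolding cycle_type_def orbits_eq by (simp add: mset_set.insert)
qed

lemma cycle_type_0: "cycle_type 0 \<sigma> = {#}"
  by (simp add: cycle_type_def)

lemma cycle_type_id: "cycle_type m id = replicate_mset m 1"
proof (induction m)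
  case 0
  then show ?case by (simp add: cycle_type_0)
next
  case (Suc m)
  have "cycle_type (Suc m) id = add_mset 1 (cycle_type m id)"
    by (rule cycle_type_Suc) (simp add: perms_def)
  then show ?case unfolding Suc.IH by (simp only: replicate_mset_Suc)
qed

lemma count_cycle_type_1:
  "count (cycle_type m \<sigma>) 1 = card {x. x < m \<and> \<sigma> x = x}"
proof -
  let ?O = "cyc_orbit \<sigma> ` {..<m}"
  have fin: "finite ?O" by simp
  have "count (cycle_type m \<sigma>) 1 = (\<Sum>y\<in>card -` {1} \<inter> ?O. count (mset_set ?O) y)"
    unfolding cycle_type_def orbits_eq count_image_mset using fin by simp
  also have "\<dots> = card (card -` {1} \<inter> ?O)"
    using fin by simp
  also have "card -` {1} \<inter> ?O = (\<lambda>x. {x}) ` {x. x < m \<and> \<sigma> x = x}"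
  proof (rule set_eqI, rule iffI)
    fix B assume "B \<in> card -` {1} \<inter> ?O"
    then obtain x where x: "x < m" "B = cyc_orbit \<sigma> x" "card (cyc_orbit \<sigma> x) = 1" by auto
    then have "\<sigma> x = x" using orbit_card1 by blast
    then show "B \<in> (\<lambda>x. {x}) ` {x. x < m \<and> \<sigma> x = x}" using x orbit_fix by auto
  next
    fix B assume "B \<in> (\<lambda>x. {x}) ` {x. x < m \<and> \<sigma> x = x}"
    then obtain x where x: "x < m" "\<sigma> x = x" "B = {x}" by auto
    then show "B \<in> card -` {1} \<inter> ?O" using orbit_fix[of \<sigma> x, OF x(2)] by auto
  qed
  also have "card \<dots> = card {x. x < m \<and> \<sigma> x = x}"
    by (rule card_image) (auto simp: inj_on_def)
  finally show ?thesis .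
qed

lemma funpow_conj:
  assumes "g permutes S"
  shows "(inv g \<circ> \<sigma> \<circ> g) ^^ k = inv g \<circ> (\<sigma> ^^ k) \<circ> g"
proof (rule ext)
  fix x
  show "((inv g \<circ> \<sigma> \<circ> g) ^^ k) x = (inv g \<circ> (\<sigma> ^^ k) \<circ> g) x"
  proof (induction k)
    case 0
    then show ?case using permutes_inverses(2)[OF assms] by simp
  next
    case (Suc k)
    then show ?case using permutes_inverses[OF assms] by simp
  qed
qed

lemma orbit_conj:
  assumes "g permutes S"
  shows "cyc_orbit (inv g \<circ> \<sigma> \<circ> g) x = inv g ` cyc_orbit \<sigma> (g x)"
  unfolding cyc_orbit_def funpow_conj[OF assms] by auto

lemma cycle_type_conj:
  assumes "g \<in> perms m"
  shows "cycle_type m (inv g \<circ> \<sigma> \<circ> g) = cycle_type m \<sigma>"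
proof -
  have gp: "g permutes {..<m}" using assms by (simp add: perms_def)
  let ?O = "cyc_orbit \<sigma> ` {..<m}"
  have inj: "inj (inv g)" using permutes_inj[OF permutes_inv[OF gp]] .
  have "cyc_orbit (inv g \<circ> \<sigma> \<circ> g) ` {..<m} = (\<lambda>B. inv g ` B) ` (cyc_orbit \<sigma> ` (g ` {..<m}))"
    unfolding orbit_conj[OF gp] by (simp add: image_image)
  also have "g ` {..<m} = {..<m}" using permutes_image[OF gp] .
  finally have eq: "cyc_orbit (inv g \<circ> \<sigma> \<circ> g) ` {..<m} = (\<lambda>B. inv g ` B) ` ?O" .
  have inj2: "inj_on (\<lambda>B. inv g ` B) ?O"
    using inj by (auto simp: inj_on_def inj_image_eq_iff)
  have "cycle_type m (inv g \<circ> \<sigma> \<circ> g) = image_mset card (image_mset (\<lambda>B. inv g ` B) (mset_set ?O))"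
    unfolding cycle_type_def orbits_eq eq image_mset_mset_set[OF inj2] ..
  also have "\<dots> = image_mset (\<lambda>B. card (inv g ` B)) (mset_set ?O)"
    by (simp add: multiset.map_comp o_def)
  also have "\<dots> = image_mset card (mset_set ?O)"
    by (rule image_mset_cong) (use inj in \<open>auto simp: card_image inj_on_subset\<close>)
  finally show ?thesis unfolding cycle_type_def orbits_eq .
qed


lemma zee_split: "zee \<mu> = fact (count \<mu> 1) * (\<Prod>j\<in>set_mset \<mu> - {1}. j ^ count \<mu> j * fact (count \<mu> j))"
proof (cases "1 \<in># \<mu>")
  case True
  then show ?thesis unfolding zee_def by (simp add: prod.remove[of "set_mset \<mu>" 1])
next
  case False
  then have "count \<mu> 1 = 0" by (simp add: count_eq_zero_iff)
  then show ?thesis using False unfolding zee_def by simp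
qed

lemma zee_add1: "zee (add_mset 1 \<mu>) = zee \<mu> * (count \<mu> 1 + 1)"
proof -
  have "(\<Prod>j\<in>set_mset (add_mset 1 \<mu>) - {1}. j ^ count (add_mset 1 \<mu>) j * fact (count (add_mset 1 \<mu>) j))
      = (\<Prod>j\<in>set_mset \<mu> - {1}. j ^ count \<mu> j * fact (count \<mu> j))"
    by (rule prod.cong) auto
  then show ?thesis
    unfolding zee_split[of "add_mset 1 \<mu>"] zee_split[of \<mu>] by (simp add: algebra_simps)
qed

lemmas zee_add1' = zee_add1[simplified]
lemmas lookup_Dp' = lookup_Dp[simplified]
lemmas lookup_p1_mult' = lookup_p1_mult[simplified]

lemma char_of_add: "char_of m (F + G) \<sigma> = char_of m F \<sigma> + char_of m G \<sigma>"
  by (simp add: char_of_def lookup_add distrib_left)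

lemma char_of_out: "\<sigma> \<notin> perms m \<Longrightarrow> char_of m F \<sigma> = 0"
  by (simp add: char_of_def)

lemma res_char:
  assumes "1 \<le> n"
  shows "res n (char_of n F) = char_of (n - 1) (Dp F)"
proof (rule ext)
  fix \<sigma>
  obtain k where n: "n = Suc k" using assms by (cases n) auto
  show "res n (char_of n F) \<sigma> = char_of (n - 1) (Dp F) \<sigma>"
  proof (cases "\<sigma> \<in> perms k")
    case True
    let ?\<mu> = "cycle_type k \<sigma>"
    have ct: "cycle_type n \<sigma> = add_mset 1 ?\<mu>" using cycle_type_Suc[OF True] n by simp
    have "res n (char_of n F) \<sigma> = of_nat (zee (add_mset 1 ?\<mu>)) * Poly_Mapping.lookup F (add_mset 1 ?\<mu>)"
      using True perms_mono[OF True] n ct by (simp add: res_def char_of_def)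
    also have "\<dots> = char_of (n - 1) (Dp F) \<sigma>"
      using True n by (simp add: char_of_def lookup_Dp' zee_add1' distrib_left)
    finally show ?thesis .
  next
    case False
    then show ?thesis using n by (simp add: res_def char_of_def)
  qed
qed

lemma card_g_to: 
  assumes "x < Suc m"
  shows "card {g \<in> perms (Suc m). g m = x} = fact m"
proof -
  let ?t = "Transposition.transpose x m"
  have tp: "?t permutes {..<Suc m}" using assms by (intro permutes_swap_id) auto
  have "{g \<in> perms (Suc m). g m = x} = (\<lambda>h. ?t \<circ> h) ` perms m"
  proof (rule set_eqI, rule iffI)
    fix g assume g: "g \<in> {g \<in> perms (Suc m). g m = x}"
    let ?h = "?t \<circ> g"
    have "?h \<in> perms (Suc m)" using g tp unfolding perms_def by (auto intro: permutes_compose)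
    moreover have "?h m = m" using g by simp
    ultimately have "?h \<in> perms m" using perms_Suc_fix by blast
    moreover have "g = ?t \<circ> ?h" by (simp add: o_assoc)
    ultimately show "g \<in> (\<lambda>h. ?t \<circ> h) ` perms m" by blast
  next
    fix g assume "g \<in> (\<lambda>h. ?t \<circ> h) ` perms m"
    then obtain h where h: "h \<in> perms m" "g = ?t \<circ> h" by blast
    have "g \<in> perms (Suc m)" using h perms_mono[OF h(1)] tp unfolding perms_def by (auto intro: permutes_compose)
    moreover have "g m = x" using h perms_fix[OF h(1)] by simp
    ultimately show "g \<in> {g \<in> perms (Suc m). g m = x}" by blast
  qed
  also have "card \<dots> = card (perms m)"
  proof (rule card_image)
    show "inj_on (\<lambda>h. ?t \<circ> h) (perms m)"
    proof (rule inj_onI)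
      fix h1 h2 assume "?t \<circ> h1 = ?t \<circ> h2"
      then have "?t \<circ> (?t \<circ> h1) = ?t \<circ> (?t \<circ> h2)" by simp
      then show "h1 = h2" by (simp add: o_assoc)
    qed
  qed
  finally show ?thesis by (simp add: card_perms)
qed

lemma card_fixg:
  "card {g \<in> perms (Suc m). \<sigma> (g m) = g m} = card {x. x < Suc m \<and> \<sigma> x = x} * fact m"
proof -
  let ?X = "{x. x < Suc m \<and> \<sigma> x = x}"
  have "{g \<in> perms (Suc m). \<sigma> (g m) = g m} = (\<Union>x\<in>?X. {g \<in> perms (Suc m). g m = x})"
  proof (rule set_eqI, rule iffI)
    fix g assume g: "g \<in> {g \<in> perms (Suc m). \<sigma> (g m) = g m}"
    then have "g m < Suc m" unfolding perms_def using permutes_in_image[of g "{..<Suc m}" m] by auto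
    then show "g \<in> (\<Union>x\<in>?X. {g \<in> perms (Suc m). g m = x})" using g by auto
  qed auto
  also have "card \<dots> = (\<Sum>x\<in>?X. card {g \<in> perms (Suc m). g m = x})"
    by (rule card_UN_disjoint) auto
  also have "\<dots> = (\<Sum>x\<in>?X. fact m)"
    by (rule sum.cong) (auto simp: card_g_to)
  finally show ?thesis by simp
qed

lemma ind_char: "ind m (char_of m G) = char_of (Suc m) (pw {#1#} * G)"
proof (rule ext)
  fix \<sigma>
  show "ind m (char_of m G) \<sigma> = char_of (Suc m) (pw {#1#} * G) \<sigma>"
  proof (cases "\<sigma> \<in> perms (Suc m)")
    case False
    then show ?thesis by (simp add: ind_def induce_char_def char_of_def)
  next
    case True
    let ?\<mu> = "cycle_type (Suc m) \<sigma>"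
    let ?K = "of_nat (zee (?\<mu> - {#1#})) * Poly_Mapping.lookup G (?\<mu> - {#1#})"
    let ?P = "\<lambda>g. \<sigma> (g m) = g m"
    have tm_eq: "(if inv g \<circ> \<sigma> \<circ> g \<in> perms m then char_of m G (inv g \<circ> \<sigma> \<circ> g) else 0) = (if ?P g then ?K else 0)"
      if g: "g \<in> perms (Suc m)" for g
    proof -
      let ?\<tau> = "inv g \<circ> \<sigma> \<circ> g"
      have gp: "g permutes {..<Suc m}" using g by (simp add: perms_def)
      have \<tau>: "?\<tau> \<in> perms (Suc m)" using perms_conj[OF g True] .
      have iff: "?\<tau> \<in> perms m \<longleftrightarrow> ?P g"
      proof -
        have "?\<tau> \<in> perms m \<longleftrightarrow> inv g (\<sigma> (g m)) = m" using perms_Suc_iff[of ?\<tau> m] \<tau> by simp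
        also have "\<dots> \<longleftrightarrow> ?P g" using permutes_inverses[OF gp] by metis
        finally show ?thesis .
      qed
      show ?thesis
      proof (cases "?P g")
        case True
        then have tm: "?\<tau> \<in> perms m" using iff by simp
        have "add_mset 1 (cycle_type m ?\<tau>) = ?\<mu>"
          using cycle_type_Suc[OF tm] cycle_type_conj[OF g] by simp
        then have "cycle_type m ?\<tau> = ?\<mu> - {#1#}" by (metis add_mset_remove_trivial)
        then show ?thesis using True tm by (simp add: char_of_def)
      next
        case False
        then show ?thesis using iff by simp
      qed
    qed
    have "(\<Sum>g\<in>perms (Suc m). if inv g \<circ> \<sigma> \<circ> g \<in> perms m then char_of m G (inv g \<circ> \<sigma> \<circ> g) else 0)
        = (\<Sum>g\<in>perms (Suc m). if ?P g then ?K else 0)"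
      by (rule sum.cong[OF refl]) (rule tm_eq)
    also have "\<dots> = (\<Sum>g\<in>{g \<in> perms (Suc m). ?P g}. ?K)"
      by (rule sum.inter_filter[symmetric]) simp
    also have "\<dots> = of_nat (count ?\<mu> 1 * fact m) * ?K"
      unfolding sum_constant card_fixg count_cycle_type_1[symmetric] ..
    finally have sum_eq: "(\<Sum>g\<in>perms (Suc m). if inv g \<circ> \<sigma> \<circ> g \<in> perms m then char_of m G (inv g \<circ> \<sigma> \<circ> g) else 0)
        = of_nat (count ?\<mu> 1 * fact m) * ?K" .
    have lhs: "ind m (char_of m G) \<sigma> = of_nat (count ?\<mu> 1) * ?K"
      unfolding ind_def induce_char_def using True sum_eq by (simp add: card_perms)
    have rhs: "char_of (Suc m) (pw {#1#} * G) \<sigma> = of_nat (count ?\<mu> 1) * ?K"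
    proof (cases "1 \<in># ?\<mu>")
      case True
      then have "?\<mu> = add_mset 1 (?\<mu> - {#1#})" by simp
      then have "zee ?\<mu> = zee (?\<mu> - {#1#}) * count ?\<mu> 1"
        by (metis zee_add1 count_add_mset add.commute plus_1_eq_Suc) 
      then show ?thesis using True \<open>\<sigma> \<in> perms (Suc m)\<close> by (simp add: char_of_def lookup_p1_mult')
    next
      case False
      then have "count ?\<mu> 1 = 0" by (simp add: count_eq_zero_iff)
      then show ?thesis using False \<open>\<sigma> \<in> perms (Suc m)\<close> by (simp add: char_of_def lookup_p1_mult')
    qed
    show ?thesis using lhs rhs by simp
  qed
qed


lemma lext_pw: "lext Q (pw k) = Q k"
  using lext_sconst_pw[of Q 1 k] by simp

lemma pleth_one: "pleth 1 g = 1"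
  using lext_pw[of "Pl g" "{#}"] by (simp add: pleth_lext Pl_def)

lemma perms_0: "perms 0 = {id}"
  by (simp add: perms_def)

lemma frob_0: "frob 0 \<chi> = sconst (\<chi> id)"
  by (simp add: frob_def perms_0 cycle_type_0)

lemma hsym_0: "hsym 0 = 1" by (simp add: hsym_def frob_0)
lemma esym_0: "esym 0 = 1" by (simp add: esym_def frob_0)

lemma Dp_frob:
  assumes m: "m = Suc k"
    and cls: "\<And>\<sigma> x. \<sigma> \<in> perms m \<Longrightarrow> x < m \<Longrightarrow>
      \<chi> (Transposition.transpose x k \<circ> \<sigma> \<circ> Transposition.transpose x k) = \<chi> \<sigma>"
  shows "Dp (frob m \<chi>) = frob k \<chi>"
proof -
  define F where "F \<sigma> = sconst (\<chi> \<sigma> / of_nat (fact m)) * pw (cycle_type m \<sigma> - {#1#})" for \<sigma>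
  have "Dp (frob m \<chi>) = (\<Sum>\<sigma>\<in>perms m. of_nat (card {x. x < m \<and> \<sigma> x = x}) * F \<sigma>)"
    unfolding frob_def Dp_sum Dp_sconst_pw
  proof (rule sum.cong[OF refl])
    fix \<sigma>
    show "sconst (\<chi> \<sigma> / of_nat (fact m)) * Dq (cycle_type m \<sigma>) = of_nat (card {x. x < m \<and> \<sigma> x = x}) * F \<sigma>"
      unfolding Dq_def F_def count_cycle_type_1 sconst_of_nat by (simp only: mult.left_commute)
  qed
  also have "\<dots> = (\<Sum>\<sigma>\<in>perms m. \<Sum>x\<in>{x. x \<in> {..<m} \<and> \<sigma> x = x}. F \<sigma>)"
    by simp
  also have "\<dots> = (\<Sum>x\<in>{..<m}. \<Sum>\<sigma>\<in>{\<sigma>. \<sigma> \<in> perms m \<and> \<sigma> x = x}. F \<sigma>)"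
    by (rule sum.swap_restrict) auto
  also have "\<dots> = (\<Sum>x\<in>{..<m}. \<Sum>\<sigma>\<in>perms k. F \<sigma>)"
  proof (rule sum.cong[OF refl])
    fix x assume x: "x \<in> {..<m}"
    let ?t = "Transposition.transpose x k"
    have tp: "?t \<in> perms m" using x m unfolding perms_def by (auto intro: permutes_swap_id)
    have tinv: "inv ?t = ?t" by simp
    have Fc: "F (?t \<circ> \<sigma> \<circ> ?t) = F \<sigma>" if "\<sigma> \<in> perms m" for \<sigma>
      using cls[OF that] x cycle_type_conj[OF tp, of \<sigma>] unfolding F_def tinv by simp
    have pk: "perms k = {\<sigma>. \<sigma> \<in> perms m \<and> \<sigma> k = k}"
      using perms_Suc_iff[of _ k] m by auto
    have tt: "?t \<circ> (?t \<circ> \<sigma> \<circ> ?t) \<circ> ?t = \<sigma>" for \<sigma> by (simp add: fun_eq_iff)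
    show "(\<Sum>\<sigma>\<in>{\<sigma>. \<sigma> \<in> perms m \<and> \<sigma> x = x}. F \<sigma>) = (\<Sum>\<sigma>\<in>perms k. F \<sigma>)"
      unfolding pk
    proof (rule sum.reindex_bij_witness[where i = "\<lambda>\<sigma>. ?t \<circ> \<sigma> \<circ> ?t" and j = "\<lambda>\<sigma>. ?t \<circ> \<sigma> \<circ> ?t"])
      fix \<sigma> assume s: "\<sigma> \<in> {\<sigma>. \<sigma> \<in> perms m \<and> \<sigma> x = x}"
      show "?t \<circ> (?t \<circ> \<sigma> \<circ> ?t) \<circ> ?t = \<sigma>" by (rule tt)
      show "?t \<circ> \<sigma> \<circ> ?t \<in> {\<sigma>. \<sigma> \<in> perms m \<and> \<sigma> k = k}"
        using s perms_conj[OF tp, of \<sigma>] by auto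
      show "F (?t \<circ> \<sigma> \<circ> ?t) = F \<sigma>" using s Fc by auto
    next
      fix \<sigma> assume s: "\<sigma> \<in> {\<sigma>. \<sigma> \<in> perms m \<and> \<sigma> k = k}"
      show "?t \<circ> (?t \<circ> \<sigma> \<circ> ?t) \<circ> ?t = \<sigma>" by (rule tt)
      show "?t \<circ> \<sigma> \<circ> ?t \<in> {\<sigma>. \<sigma> \<in> perms m \<and> \<sigma> x = x}"
        using s perms_conj[OF tp, of \<sigma>] by auto
    qed
  qed
  also have "\<dots> = of_nat m * (\<Sum>\<sigma>\<in>perms k. F \<sigma>)"
    by simp
  also have "\<dots> = frob k \<chi>"
    unfolding frob_def sum_distrib_left
  proof (rule sum.cong[OF refl])
    fix \<sigma> assume s: "\<sigma> \<in> perms k"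
    have ct: "cycle_type m \<sigma> - {#1#} = cycle_type k \<sigma>"
      using cycle_type_Suc[OF s] m by simp
    have "of_nat m * (\<chi> \<sigma> / of_nat (fact m)) = (\<chi> \<sigma> / of_nat (fact k) :: complex)"
    proof -
      have "of_nat (fact m) = (of_nat m * of_nat (fact k) :: complex)" using m by (simp add: algebra_simps)
      moreover have "(of_nat m :: complex) \<noteq> 0" using m by (simp del: of_nat_Suc)
      ultimately show ?thesis by simp
    qed
    then show "of_nat m * F \<sigma> = sconst (\<chi> \<sigma> / of_nat (fact k)) * pw (cycle_type k \<sigma>)"
      unfolding F_def ct sconst_of_nat[symmetric] mult.assoc[symmetric] sconst_mult by simp
  qed
  finally show ?thesis .
qed

lemma Dp_hsym: "Dp (hsym (Suc k)) = hsym k"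
  unfolding hsym_def by (rule Dp_frob) auto

lemma sign_conj_transpose:
  assumes "\<sigma> \<in> perms m"
  shows "sign (Transposition.transpose x k \<circ> \<sigma> \<circ> Transposition.transpose x k) = sign \<sigma>"
proof -
  have p: "permutation \<sigma>" using assms unfolding perms_def by (auto intro: permutes_imp_permutation)
  have t: "permutation (Transposition.transpose x k)" by (rule permutation_swap_id)
  have "sign (Transposition.transpose x k \<circ> \<sigma> \<circ> Transposition.transpose x k)
      = sign (Transposition.transpose x k) * sign \<sigma> * sign (Transposition.transpose x k)"
    using p t by (simp add: sign_compose permutation_compose)
  also have "\<dots> = sign \<sigma>" by (simp add: sign_swap_id)
  finally show ?thesis .
qed

lemma Dp_esym: "Dp (esym (Suc k)) = esym k"
  unfolding esym_def by (rule Dp_frob) (auto simp: sign_conj_transpose)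


lemma ncycle_pow: "y < j \<Longrightarrow> (ncycle j ^^ k) y = (y + k) mod j"
proof (induction k)
  case 0
  then show ?case by simp
next
  case (Suc k)
  then have "(y + k) mod j < j" by simp
  then show ?case using Suc by (simp add: ncycle_def mod_Suc_eq)
qed

lemma Cn_fix:
  assumes "h \<in> Cn j" "y < j" "h y = y"
  shows "h = id"
proof -
  obtain k where k: "k < j" "h = ncycle j ^^ k" using assms(1) unfolding Cn_def by auto
  have e: "(y + k) mod j = y" using assms(2,3) k ncycle_pow[of y j k] by simp
  have "k = 0"
  proof (cases "y + k < j")
    case True
    then show ?thesis using e by simp
  next
    case False
    then have "(y + k) mod j = (y + k - j) mod j" by (simp add: le_mod_geq)
    also have "\<dots> = y + k - j" using k assms(2) by simp
    finally show ?thesis using e k False by simp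
  qed
  then show ?thesis using k by simp
qed

lemma chi_id: "0 < j \<Longrightarrow> chi_zeta j id = 1"
proof -
  assume j: "0 < j"
  have "(THE k. k < j \<and> id = ncycle j ^^ k) = 0"
  proof (rule the_equality)
    show "0 < j \<and> id = ncycle j ^^ 0" using j by simp
  next
    fix k assume k: "k < j \<and> id = ncycle j ^^ k"
    then have "(ncycle j ^^ k) 0 = 0" by (metis id_apply)
    then show "k = 0" using ncycle_pow[of 0 j k] j k by simp
  qed
  then show ?thesis unfolding chi_zeta_def by simp
qed

lemma card_Cn: "0 < j \<Longrightarrow> card (Cn j) = j"
proof -
  assume j: "0 < j"
  have "Cn j = (\<lambda>k. ncycle j ^^ k) ` {..<j}" unfolding Cn_def by auto
  moreover have "inj_on (\<lambda>k. ncycle j ^^ k) {..<j}"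
  proof (rule inj_onI)
    fix a b assume "a \<in> {..<j}" "b \<in> {..<j}" "ncycle j ^^ a = ncycle j ^^ b"
    then show "a = b" using ncycle_pow[of 0 j a] ncycle_pow[of 0 j b] j by (metis add_0 lessThan_iff mod_less)
  qed
  ultimately show ?thesis by (simp add: card_image)
qed

lemma induce_class:
  assumes t: "t \<in> perms n" and s: "\<sigma> \<in> perms n"
  shows "induce_char (perms n) H \<psi> (inv t \<circ> \<sigma> \<circ> t) = induce_char (perms n) H \<psi> \<sigma>"
proof -
  have tp: "t permutes {..<n}" using t by (simp add: perms_def)
  have bt: "bij t" using permutes_bij[OF tp] .
  have "(\<Sum>g\<in>perms n. if inv g \<circ> (inv t \<circ> \<sigma> \<circ> t) \<circ> g \<in> H then \<psi> (inv g \<circ> (inv t \<circ> \<sigma> \<circ> t) \<circ> g) else 0)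
      = (\<Sum>g\<in>perms n. if inv g \<circ> \<sigma> \<circ> g \<in> H then \<psi> (inv g \<circ> \<sigma> \<circ> g) else 0)"
  proof (rule sum.reindex_bij_witness[where j = "\<lambda>g. t \<circ> g" and i = "\<lambda>g. inv t \<circ> g"])
    fix g assume g: "g \<in> perms n"
    have gp: "g permutes {..<n}" using g by (simp add: perms_def)
    show "inv t \<circ> (t \<circ> g) = g" using permutes_inv_o(2)[OF tp] by (simp add: o_assoc)
    show "t \<circ> g \<in> perms n" using gp tp by (simp add: perms_def permutes_compose)
    have "inv (t \<circ> g) = inv g \<circ> inv t" using o_inv_distrib[OF bt permutes_bij[OF gp]] .
    then have "inv (t \<circ> g) \<circ> \<sigma> \<circ> (t \<circ> g) = inv g \<circ> (inv t \<circ> \<sigma> \<circ> t) \<circ> g" by (simp add: o_assoc)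
    then show "(if inv (t \<circ> g) \<circ> \<sigma> \<circ> (t \<circ> g) \<in> H then \<psi> (inv (t \<circ> g) \<circ> \<sigma> \<circ> (t \<circ> g)) else 0) =
      (if inv g \<circ> (inv t \<circ> \<sigma> \<circ> t) \<circ> g \<in> H then \<psi> (inv g \<circ> (inv t \<circ> \<sigma> \<circ> t) \<circ> g) else 0)" by simp
  next
    fix g assume g: "g \<in> perms n"
    have gp: "g permutes {..<n}" using g by (simp add: perms_def)
    show "t \<circ> (inv t \<circ> g) = g" using permutes_inv_o(1)[OF tp] by (simp add: o_assoc)
    show "inv t \<circ> g \<in> perms n" using gp permutes_inv[OF tp] by (simp add: perms_def permutes_compose)
  qed
  moreover have "inv t \<circ> \<sigma> \<circ> t \<in> perms n" using perms_conj[OF t s] .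
  ultimately show ?thesis using s unfolding induce_char_def by simp
qed

lemma Lie_res:
  assumes j: "j = Suc k" and tau: "\<tau> \<in> perms k"
  shows "Lie_char j \<tau> = (if \<tau> = id then of_nat (fact j) / of_nat j else 0)"
proof -
  have tj: "\<tau> \<in> perms j" using perms_mono[OF tau] j by simp
  have cn: "card (Cn j) = j" using card_Cn j by simp
  show ?thesis
  proof (cases "\<tau> = id")
    case True
    have "(\<Sum>g\<in>perms j. if inv g \<circ> \<tau> \<circ> g \<in> Cn j then chi_zeta j (inv g \<circ> \<tau> \<circ> g) else 0) = (\<Sum>g\<in>perms j. 1)"
    proof (rule sum.cong[OF refl])
      fix g assume g: "g \<in> perms j"
      have "inv g \<circ> \<tau> \<circ> g = id" using True permutes_inv_o(2)[of g "{..<j}"] g by (simp add: perms_def)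
      moreover have "id \<in> Cn j" unfolding Cn_def using j by (auto intro!: exI[of _ 0])
      ultimately show "(if inv g \<circ> \<tau> \<circ> g \<in> Cn j then chi_zeta j (inv g \<circ> \<tau> \<circ> g) else 0) = 1"
        using chi_id[of j] j by simp
    qed
    then show ?thesis using True tj cn unfolding Lie_char_def induce_char_def by (simp add: card_perms)
  next
    case False
    have "(\<Sum>g\<in>perms j. if inv g \<circ> \<tau> \<circ> g \<in> Cn j then chi_zeta j (inv g \<circ> \<tau> \<circ> g) else 0) = 0"
    proof (rule sum.neutral, rule ballI)
      fix g assume g: "g \<in> perms j"
      have gp: "g permutes {..<j}" using g by (simp add: perms_def)
      have "inv g \<circ> \<tau> \<circ> g \<notin> Cn j"
      proof
        assume c: "inv g \<circ> \<tau> \<circ> g \<in> Cn j"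
        let ?y = "inv g k"
        have y: "?y < j" using permutes_in_image[OF permutes_inv[OF gp], of k] j by simp
        have "(inv g \<circ> \<tau> \<circ> g) ?y = ?y"
          using perms_fix[OF tau] permutes_inverses(1)[OF gp, of k] by simp
        then have h: "inv g \<circ> \<tau> \<circ> g = id" using Cn_fix[OF c y] by simp
        have "\<tau> z = z" for z
        proof -
          have "(inv g \<circ> \<tau> \<circ> g) (inv g z) = inv g z" using h by simp
          then have "inv g (\<tau> z) = inv g z" using permutes_inverses(1)[OF gp, of z] by simp
          then have "g (inv g (\<tau> z)) = g (inv g z)" by simp
          then show "\<tau> z = z" using permutes_inverses(1)[OF gp] by simp
        qed
        then show False using False by auto
      qed
      then show "(if inv g \<circ> \<tau> \<circ> g \<in> Cn j then chi_zeta j (inv g \<circ> \<tau> \<circ> g) else 0) = 0" by simp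
    qed
    then show ?thesis using False tj unfolding Lie_char_def induce_char_def by simp
  qed
qed

lemma Dp_ell: "Dp (ell (Suc k)) = pw (replicate_mset k 1)"
proof -
  let ?j = "Suc k"
  have "Dp (ell ?j) = frob k (Lie_char ?j)"
    unfolding ell_def
  proof (rule Dp_frob[OF refl])
    fix \<sigma> x assume s: "\<sigma> \<in> perms ?j" and x: "x < ?j"
    let ?t = "Transposition.transpose x k"
    have tp: "?t \<in> perms ?j" using x unfolding perms_def by (auto intro: permutes_swap_id)
    show "Lie_char ?j (?t \<circ> \<sigma> \<circ> ?t) = Lie_char ?j \<sigma>"
      using induce_class[OF tp s, of "Cn ?j" "chi_zeta ?j"] unfolding Lie_char_def by simp
  qed
  also have "\<dots> = (\<Sum>\<tau>\<in>perms k. if \<tau> = id then pw (replicate_mset k 1) else 0)"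
    unfolding frob_def
  proof (rule sum.cong[OF refl])
    fix \<tau> assume t: "\<tau> \<in> perms k"
    have f: "(of_nat (fact ?j) / of_nat ?j / of_nat (fact k) :: complex) = 1"
    proof -
      have "(of_nat (fact ?j) :: complex) = of_nat ?j * of_nat (fact k)" by (simp only: fact_Suc of_nat_mult of_nat_id)
      moreover have "(of_nat ?j :: complex) \<noteq> 0" by (simp del: of_nat_Suc)
      moreover have "(of_nat (fact k) :: complex) \<noteq> 0" by simp
      ultimately show ?thesis by simp
    qed
    show "sconst (Lie_char ?j \<tau> / of_nat (fact k)) * pw (cycle_type k \<tau>) = (if \<tau> = id then pw (replicate_mset k 1) else 0)"
      using Lie_res[OF refl t] f by (simp add: cycle_type_id)
  qed
  also have "\<dots> = pw (replicate_mset k 1)"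
  proof -
    have "id \<in> perms k" by (simp add: perms_def)
    then show ?thesis unfolding sum.delta[OF finite_perms] by (rule if_P)
  qed
  finally show ?thesis .
qed

lemma omega_pw: "omega (pw \<mu>) = sconst (sgnr \<mu>) * pw \<mu>"
  unfolding omega_lext lext_pw ..

lemma Dp_piL: "Dp (piL (Suc k)) = pw (replicate_mset k 1)"
  unfolding piL_def Dp_omega Dp_ell omega_pw by (simp add: sgnr_def)


definition P1 :: "nat \<Rightarrow> symf" where "P1 k = pw (replicate_mset k 1)"

lemma P1_Suc: "P1 (Suc k) = pw {#1#} * P1 k"
  by (simp add: P1_def pw_mult)

definition Xp :: "(nat \<Rightarrow> nat \<Rightarrow> symf) \<Rightarrow> nat multiset \<Rightarrow> symf" where
  "Xp f la = (\<Prod>j\<in>set_mset la. f (count la j) j)"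

definition Sp :: "(nat \<Rightarrow> nat \<Rightarrow> symf) \<Rightarrow> nat \<Rightarrow> nat \<Rightarrow> symf" where
  "Sp f i n = (\<Sum>la\<in>hat_parts i n. Xp f la)"

lemma Dp_prod:
  assumes "finite J"
  shows "Dp (\<Prod>j\<in>J. F j) = (\<Sum>j\<in>J. Dp (F j) * (\<Prod>i\<in>J - {j}. F i))"
  using assms
proof (induction J rule: finite_induct)
  case empty
  then show ?case by simp
next
  case (insert a J)
  have e1: "insert a J - {a} = J" using insert.hyps by auto
  have e2: "(\<Prod>i\<in>insert a J - {j}. F i) = F a * (\<Prod>i\<in>J - {j}. F i)" if "j \<in> J" for j
  proof -
    have "insert a J - {j} = insert a (J - {j})" using that insert.hyps by auto
    then show ?thesis using insert.hyps by simp
  qed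
  have "Dp (\<Prod>j\<in>insert a J. F j) = Dp (F a) * (\<Prod>j\<in>J. F j) + F a * Dp (\<Prod>j\<in>J. F j)"
    using insert.hyps by (simp add: Dp_mult)
  also have "\<dots> = Dp (F a) * (\<Prod>i\<in>insert a J - {a}. F i) + (\<Sum>j\<in>J. Dp (F j) * (\<Prod>i\<in>insert a J - {j}. F i))"
    unfolding insert.IH e1 sum_distrib_left
    by (simp add: e2 mult.left_commute)
  also have "\<dots> = (\<Sum>j\<in>insert a J. Dp (F j) * (\<Prod>i\<in>insert a J - {j}. F i))"
    using insert.hyps by simp
  finally show ?case .
qed

context
  fixes f :: "nat \<Rightarrow> nat \<Rightarrow> symf"
  assumes f0: "\<And>j. f 0 j = 1"
    and fD: "\<And>c j. Dp (f (Suc c) (Suc j)) = f c (Suc j) * P1 j"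
begin

lemma Xp_superset:
  assumes "finite T" "set_mset M \<subseteq> T"
  shows "Xp f M = (\<Prod>j\<in>T. f (count M j) j)"
  unfolding Xp_def
  by (rule prod.mono_neutral_left) (use assms in \<open>auto simp: f0 not_in_iff\<close>)

lemma Dp_Xp:
  assumes "0 \<notin># la"
  shows "Dp (Xp f la) = (\<Sum>j\<in>set_mset la. Xp f (la - {#j#}) * P1 (j - 1))"
proof -
  have "Dp (Xp f la) = (\<Sum>j\<in>set_mset la. Dp (f (count la j) j) * (\<Prod>i\<in>set_mset la - {j}. f (count la i) i))"
    unfolding Xp_def by (rule Dp_prod) simp
  also have "\<dots> = (\<Sum>j\<in>set_mset la. Xp f (la - {#j#}) * P1 (j - 1))"
  proof (rule sum.cong[OF refl])
  fix j assume j: "j \<in> set_mset la"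
  then obtain c where c: "count la j = Suc c" by (metis count_eq_zero_iff not0_implies_Suc)
  obtain j' where j': "j = Suc j'" using j assms by (metis not0_implies_Suc)
  have d: "Dp (f (count la j) j) = f c j * P1 (j - 1)" using fD[of c j'] c j' by simp
  have "Xp f (la - {#j#}) = (\<Prod>i\<in>set_mset la. f (count (la - {#j#}) i) i)"
    by (rule Xp_superset) (auto dest: in_diffD)
  also have "\<dots> = f (count (la - {#j#}) j) j * (\<Prod>i\<in>set_mset la - {j}. f (count (la - {#j#}) i) i)"
    using j by (simp add: prod.remove)
  also have "\<dots> = f c j * (\<Prod>i\<in>set_mset la - {j}. f (count la i) i)"
    using c by (auto intro!: prod.cong)
  finally show "Dp (f (count la j) j) * (\<Prod>i\<in>set_mset la - {j}. f (count la i) i) = Xp f (la - {#j#}) * P1 (j - 1)"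
    unfolding d by (simp add: ac_simps)
qed
  finally show ?thesis .
qed

end


lemma size_le_sum: "0 \<notin># M \<Longrightarrow> size M \<le> sum_mset (M :: nat multiset)"
  by (induction M) auto

lemma mem_le_sum: "x \<in># M \<Longrightarrow> x \<le> sum_mset (M :: nat multiset)"
  by (metis multi_member_split le_add1 sum_mset.add_mset)

lemma hat_parts_iff: "la \<in> hat_parts i n \<longleftrightarrow>
    sum_mset la = n \<and> 0 \<notin># la \<and> 1 \<notin># la \<and> sum_mset la - size la = i"
  by (auto simp: hat_parts_def partitions_def rank_def)

lemma finite_hat: "finite (hat_parts i n)"
proof -
  have "hat_parts i n \<subseteq> (\<Union>k\<in>{..n}. multisets_of_size {..n} k)"
  proof
    fix la assume la: "la \<in> hat_parts i n"
    then have "set_mset la \<subseteq> {..n}" using mem_le_sum by (auto simp: hat_parts_iff)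
    moreover have "size la \<le> n" using la size_le_sum by (auto simp: hat_parts_iff)
    ultimately show "la \<in> (\<Union>k\<in>{..n}. multisets_of_size {..n} k)"
      by (auto simp: multisets_of_size_def)
  qed
  moreover have "finite (\<Union>k\<in>{..n}. multisets_of_size {..n} k)" by auto
  ultimately show ?thesis by (rule finite_subset)
qed

lemma hat_mem_bounds:
  assumes "la \<in> hat_parts i n" "j \<in># la"
  shows "2 \<le> j \<and> j \<le> Suc i \<and> j \<le> n"
proof -
  obtain la' where la': "la = add_mset j la'" using assms(2) by (metis multi_member_split)
  have h: "sum_mset la = n" "0 \<notin># la" "1 \<notin># la" "sum_mset la - size la = i"
    using assms(1) by (auto simp: hat_parts_iff)
  have "j \<noteq> 0" "j \<noteq> 1" using h(2,3) assms(2) by metis+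
  moreover have "size la' \<le> sum_mset la'" using h(2) la' by (intro size_le_sum) auto
  ultimately show ?thesis using h la' by auto
qed

lemma hat_bij:
  assumes "2 \<le> j" "j \<le> Suc i" "j \<le> n"
  shows "{la \<in> hat_parts i n. j \<in># la} = add_mset j ` hat_parts (Suc i - j) (n - j)"
proof (rule set_eqI, rule iffI)
  fix la assume "la \<in> {la \<in> hat_parts i n. j \<in># la}"
  then have la: "la \<in> hat_parts i n" "j \<in># la" by auto
  obtain la' where la': "la = add_mset j la'" using la(2) by (metis multi_member_split)
  have h: "sum_mset la = n" "0 \<notin># la" "1 \<notin># la" "sum_mset la - size la = i"
    using la(1) by (auto simp: hat_parts_iff)
  have sz: "size la' \<le> sum_mset la'" using h(2) la' by (intro size_le_sum) auto
  have "la' \<in> hat_parts (Suc i - j) (n - j)"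
    unfolding hat_parts_iff using h la' sz by auto
  then show "la \<in> add_mset j ` hat_parts (Suc i - j) (n - j)" using la' by auto
next
  fix la assume "la \<in> add_mset j ` hat_parts (Suc i - j) (n - j)"
  then obtain la' where la': "la = add_mset j la'" "la' \<in> hat_parts (Suc i - j) (n - j)" by auto
  have h: "sum_mset la' = n - j" "0 \<notin># la'" "1 \<notin># la'" "sum_mset la' - size la' = Suc i - j"
    using la'(2) by (auto simp: hat_parts_iff)
  have sz: "size la' \<le> sum_mset la'" using h(2) by (rule size_le_sum)
  have "la \<in> hat_parts i n" unfolding hat_parts_iff using h la'(1) sz assms by auto
  then show "la \<in> {la \<in> hat_parts i n. j \<in># la}" using la'(1) by auto
qed

context
  fixes f :: "nat \<Rightarrow> nat \<Rightarrow> symf"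
  assumes f0: "\<And>j. f 0 j = 1"
    and fD: "\<And>c j. Dp (f (Suc c) (Suc j)) = f c (Suc j) * P1 j"
begin

lemma Dp_Sp: "Dp (Sp f i n) = (\<Sum>j\<in>{..n}. if 2 \<le> j \<and> j \<le> Suc i then Sp f (Suc i - j) (n - j) * P1 (j - 1) else 0)"
proof -
  let ?H = "hat_parts i n"
  have "Dp (Sp f i n) = (\<Sum>la\<in>?H. \<Sum>j\<in>{j. j \<in> {..n} \<and> j \<in># la}. Xp f (la - {#j#}) * P1 (j - 1))"
    unfolding Sp_def Dp_sum
  proof (rule sum.cong[OF refl])
    fix la assume la: "la \<in> ?H"
    have z: "0 \<notin># la" using la by (auto simp: hat_parts_iff)
    have "{j. j \<in> {..n} \<and> j \<in># la} = set_mset la" using hat_mem_bounds[OF la] by auto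
    then show "Dp (Xp f la) = (\<Sum>j\<in>{j. j \<in> {..n} \<and> j \<in># la}. Xp f (la - {#j#}) * P1 (j - 1))"
      using Dp_Xp[OF f0 fD z] by simp
  qed
  also have "\<dots> = (\<Sum>j\<in>{..n}. \<Sum>la\<in>{la. la \<in> ?H \<and> j \<in># la}. Xp f (la - {#j#}) * P1 (j - 1))"
    by (rule sum.swap_restrict) (auto simp: finite_hat)
  also have "\<dots> = (\<Sum>j\<in>{..n}. if 2 \<le> j \<and> j \<le> Suc i then Sp f (Suc i - j) (n - j) * P1 (j - 1) else 0)"
  proof (rule sum.cong[OF refl])
    fix j assume j: "j \<in> {..n}"
    show "(\<Sum>la\<in>{la. la \<in> ?H \<and> j \<in># la}. Xp f (la - {#j#}) * P1 (j - 1)) =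
      (if 2 \<le> j \<and> j \<le> Suc i then Sp f (Suc i - j) (n - j) * P1 (j - 1) else 0)"
    proof (cases "2 \<le> j \<and> j \<le> Suc i")
      case True
      have e: "{la. la \<in> ?H \<and> j \<in># la} = add_mset j ` hat_parts (Suc i - j) (n - j)"
        using hat_bij[of j i n] True j by auto
      have "(\<Sum>la\<in>add_mset j ` hat_parts (Suc i - j) (n - j). Xp f (la - {#j#}) * P1 (j - 1))
          = (\<Sum>la\<in>hat_parts (Suc i - j) (n - j). Xp f la * P1 (j - 1))"
        by (subst sum.reindex) (auto simp: inj_on_def)
      then show ?thesis unfolding e Sp_def sum_distrib_right using True by simp
    next
      case False
      have "{la. la \<in> ?H \<and> j \<in># la} = {}" using hat_mem_bounds False by blast
      then show ?thesis unfolding if_not_P[OF False] by (simp only: sum.empty)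
    qed
  qed
  finally show ?thesis .
qed

lemma Dp_Sp_rec: "Dp (Sp f (Suc i) (Suc (Suc n))) = pw {#1#} * (Dp (Sp f i (Suc n)) + Sp f i n)"
proof -
  define g where "g j = (if 2 \<le> j \<and> j \<le> Suc (Suc i) then Sp f (Suc (Suc i) - j) (Suc (Suc n) - j) * P1 (j - 1) else 0)" for j
  define h where "h j = (if 2 \<le> j \<and> j \<le> Suc i then Sp f (Suc i - j) (Suc n - j) * P1 (j - 1) else 0)" for j
  have "Dp (Sp f (Suc i) (Suc (Suc n))) = (\<Sum>j\<le>Suc (Suc n). g j)"
    unfolding Dp_Sp g_def ..
  also have "\<dots> = g 0 + (\<Sum>j\<le>Suc n. g (Suc j))" by (rule sum.atMost_Suc_shift)
  also have "\<dots> = (\<Sum>j\<le>Suc n. (if j = 1 then pw {#1#} * Sp f i n else 0) + pw {#1#} * h j)"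
  proof -
    have "g 0 = 0" by (simp add: g_def)
    moreover have "g (Suc j) = (if j = 1 then pw {#1#} * Sp f i n else 0) + pw {#1#} * h j" for j
    proof (cases "j = 0")
      case True
      then show ?thesis by (simp add: g_def h_def)
    next
      case False
      then obtain j' where j': "j = Suc j'" by (metis not0_implies_Suc)
      show ?thesis
      proof (cases "j = 1")
        case True
        then show ?thesis by (simp add: g_def h_def P1_def)
      next
        case False
        then have "j' \<noteq> 0" using j' by simp
        then show ?thesis using j' by (simp add: g_def h_def P1_Suc ac_simps)
      qed
    qed
    ultimately show ?thesis by simp
  qed
  also have "\<dots> = pw {#1#} * Sp f i n + pw {#1#} * (\<Sum>j\<le>Suc n. h j)"
    by (simp add: sum.distrib sum_distrib_left distrib_left)
  also have "(\<Sum>j\<le>Suc n. h j) = Dp (Sp f i (Suc n))"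
    unfolding Dp_Sp h_def ..
  finally show ?thesis by (simp add: distrib_left)
qed

end


lemma main_gen:
  fixes f :: "nat \<Rightarrow> nat \<Rightarrow> symf"
  assumes f0: "\<And>j. f 0 j = 1"
    and fD: "\<And>c j. Dp (f (Suc c) (Suc j)) = f c (Suc j) * P1 j"
  shows "res (Suc (Suc n)) (char_of (Suc (Suc n)) (Sp f (Suc i) (Suc (Suc n)))) =
     ind n (\<lambda>\<sigma>. res (Suc n) (char_of (Suc n) (Sp f i (Suc n))) \<sigma> + char_of n (Sp f i n) \<sigma>)"
proof -
  have "res (Suc (Suc n)) (char_of (Suc (Suc n)) (Sp f (Suc i) (Suc (Suc n))))
      = char_of (Suc n) (Dp (Sp f (Suc i) (Suc (Suc n))))"
    using res_char[of "Suc (Suc n)"] by simp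
  also have "\<dots> = char_of (Suc n) (pw {#1#} * (Dp (Sp f i (Suc n)) + Sp f i n))"
    unfolding Dp_Sp_rec[of f, OF f0 fD] ..
  also have "\<dots> = ind n (char_of n (Dp (Sp f i (Suc n)) + Sp f i n))"
    unfolding ind_char ..
  also have "char_of n (Dp (Sp f i (Suc n)) + Sp f i n) =
      (\<lambda>\<sigma>. res (Suc n) (char_of (Suc n) (Sp f i (Suc n))) \<sigma> + char_of n (Sp f i n) \<sigma>)"
  proof (rule ext)
    fix \<sigma>
    show "char_of n (Dp (Sp f i (Suc n)) + Sp f i n) \<sigma> =
      res (Suc n) (char_of (Suc n) (Sp f i (Suc n))) \<sigma> + char_of n (Sp f i n) \<sigma>"
      unfolding char_of_add using res_char[of "Suc n" "Sp f i (Suc n)"] by simp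
  qed
  finally show ?thesis .
qed

definition fL :: "nat \<Rightarrow> nat \<Rightarrow> symf" where "fL c j = pleth (hsym c) (ell j)"
definition fW :: "nat \<Rightarrow> nat \<Rightarrow> symf" where
  "fW c j = (if odd j then pleth (hsym c) (piL j) else pleth (esym c) (piL j))"

lemma fL0: "fL 0 j = 1" by (simp add: fL_def hsym_0 pleth_one)
lemma fW0: "fW 0 j = 1" by (simp add: fW_def hsym_0 esym_0 pleth_one)

lemma fLD: "Dp (fL (Suc c) (Suc j)) = fL c (Suc j) * P1 j"
  unfolding fL_def Dp_pleth Dp_hsym Dp_ell P1_def ..

lemma fWD: "Dp (fW (Suc c) (Suc j)) = fW c (Suc j) * P1 j"
  unfolding fW_def by (simp add: Dp_pleth Dp_hsym Dp_esym Dp_piL P1_def)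

lemma LieHat_Sp: "LieHat i m = char_of m (Sp fL i m)"
  unfolding LieHat_def Sp_def Xp_def ch_Lie_def fL_def ..

lemma WHat_Sp: "WHat i m = char_of m (Sp fW i m)"
  unfolding WHat_def Sp_def Xp_def ch_W_def fW_def ..

theorem theorem1p4:
  fixes n i :: nat
  assumes "n \<ge> 2" and "i \<ge> 1"
  shows "res n (LieHat i n) =
           ind (n - 2) (\<lambda>\<sigma>. res (n - 1) (LieHat (i - 1) (n - 1)) \<sigma> + LieHat (i - 1) (n - 2) \<sigma>)
       \<and> res n (WHat i n) =
           ind (n - 2) (\<lambda>\<sigma>. res (n - 1) (WHat (i - 1) (n - 1)) \<sigma> + WHat (i - 1) (n - 2) \<sigma>)"
proof -
  obtain n' where n: "n = Suc (Suc n')" using assms(1) by (metis add_2_eq_Suc le_Suc_ex)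
  obtain i' where i: "i = Suc i'" using assms(2) by (cases i) auto
  show ?thesis
    unfolding n i LieHat_Sp WHat_Sp
    using main_gen[of fL, OF fL0 fLD, of n' i'] main_gen[of fW, OF fW0 fWD, of n' i'] by simp
qed


end
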